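(* Let $I\subseteq\mathbb{R}$ be an interval, let $f\in P(I)$, let $a,b\in I$ with $a<b$, and let $f\in L_{1}[a,b]$. Then for every $\alpha>0$, $$f\left(\frac{a+b}{2}\right)\leq \frac{\Gamma(\alpha+1)}{(b-a)^{\alpha}}\left[J_{a^{+}}^{\alpha}f(b)+J_{b^{-}}^{\alpha}f(a)\right]\leq 2\left(f(a)+f(b)\right).$$
   Context: The class $P(I)$ consists of all functions $f:I\to\mathbb{R}$ that are nonnegative and satisfy $f(\lambda x+(1-\lambda)y)\leq f(x)+f(y)$ for all $x,y\in I$ and $\lambda\in[0,1]$. For $f\in L_1[a,b]$ and $\alpha>0$, the Riemann–Liouville fractional integrals are $J_{a^{+}}^{\alpha}f(x)=\frac{1}{\Gamma(\alpha)}\int_a^x (x-t)^{\alpha-1}f(t)\,dt$ for $x>a$ and $J_{b^{-}}^{\alpha}f(x)=\frac{1}{\Gamma(\alpha)}\int_x^b (t-x)^{\alpha-1}f(t)\,dt$ for $x<b$, where $\Gamma(\alpha)=\int_0^\infty e^{-u}u^{\alpha-1}\,du$. *)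

theory Defs
  imports "HOL-Analysis.Analysis"
begin

definition P_class :: "real set \<Rightarrow> (real \<Rightarrow> real) \<Rightarrow> bool" where
  "P_class I f \<longleftrightarrow> (\<forall>x\<in>I. 0 \<le> f x) \<and>
     (\<forall>x\<in>I. \<forall>y\<in>I. \<forall>l\<in>{0..1::real}. f (l * x + (1 - l) * y) \<le> f x + f y)"

definition RL_left :: "real \<Rightarrow> real \<Rightarrow> (real \<Rightarrow> real) \<Rightarrow> real \<Rightarrow> real" where
  "RL_left \<alpha> a f x = (1 / Gamma \<alpha>) * (LINT t:{a..x}|lborel. (x - t) powr (\<alpha> - 1) * f t)"

definition RL_right :: "real \<Rightarrow> real \<Rightarrow> (real \<Rightarrow> real) \<Rightarrow> real \<Rightarrow> real" where
  "RL_right \<alpha> b f x = (1 / Gamma \<alpha>) * (LINT t:{x..b}|lborel. (t - x) powr (\<alpha> - 1) * f t)"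

end

theory Submission
  imports Defs
begin

lemma refl_int:
  fixes g :: "real \<Rightarrow> real" and a b :: real
  assumes "(g has_integral i) {a..b}"
  shows "((\<lambda>t. g (a + b - t)) has_integral i) {a..b}"
proof -
  have "((\<lambda>x. g (-x)) has_integral i) {-b..-a}" using assms by simp
  then have "(((\<lambda>x. g (-x)) \<circ> (+) (-(a+b))) has_integral i) {a..b}"
    by (subst has_integral_shift_Icc_real) simp
  then show ?thesis by (simp add: o_def add.commute)
qed

lemma w_int:
  fixes a b \<alpha> :: real assumes "a < b" "\<alpha> > 0"
  shows "((\<lambda>t. (t - a) powr (\<alpha> - 1)) has_integral (b-a) powr \<alpha> / \<alpha>) {a..b}"
proof -
  have "((\<lambda>x. x powr (\<alpha> - 1)) has_integral (b-a) powr (\<alpha>-1+1) / (\<alpha>-1+1)) {0..b-a}"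
    using assms by (intro has_integral_powr_from_0) auto
  then have "(((\<lambda>x. x powr (\<alpha> - 1)) \<circ> (+) (-a)) has_integral (b-a) powr \<alpha> / \<alpha>) {a..b}"
    by (subst has_integral_shift_Icc_real) simp
  then show ?thesis by (simp add: o_def)
qed

lemma lborel_of_HK:
  fixes w :: "real \<Rightarrow> real"
  assumes "w integrable_on S" "\<And>x. x \<in> S \<Longrightarrow> 0 \<le> w x" "set_borel_measurable lborel S w"
  shows "set_integrable lborel S w"
proof -
  have "w absolutely_integrable_on S" using assms nonnegative_absolutely_integrable_1 by blast
  then show ?thesis using assms(3)
    unfolding set_integrable_def set_borel_measurable_def
    by (simp add: integrable_completion)
qed

theorem theorem7:
  fixes I :: "real set" and f :: "real \<Rightarrow> real" and a b \<alpha> :: real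
  assumes "is_interval I"
    and "P_class I f"
    and "a \<in> I" and "b \<in> I" and "a < b"
    and "set_integrable lborel {a..b} f"
    and "\<alpha> > 0"
  shows "f ((a + b) / 2) \<le> Gamma (\<alpha> + 1) / (b - a) powr \<alpha> * (RL_left \<alpha> a f b + RL_right \<alpha> b f a)
    \<and> Gamma (\<alpha> + 1) / (b - a) powr \<alpha> * (RL_left \<alpha> a f b + RL_right \<alpha> b f a) \<le> 2 * (f a + f b)"
proof -
  have II: "{a..b} \<subseteq> I"
  proof
    fix x assume "x \<in> {a..b}"
    then show "x \<in> I" using mem_is_interval_1_I[OF assms(1,3,4)] by simp
  qed
  have nn: "\<And>x. x \<in> I \<Longrightarrow> 0 \<le> f x" and cv: "\<And>x y l. x \<in> I \<Longrightarrow> y \<in> I \<Longrightarrow> 0 \<le> l \<Longrightarrow> l \<le> 1 \<Longrightarrow> f (l * x + (1 - l) * y) \<le> f x + f y"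
    using assms(2) unfolding P_class_def by (auto simp del: atLeastAtMost_iff) (meson atLeastAtMost_iff)
  define M where "M = f a + f b"
  have bnd: "0 \<le> f t \<and> f t \<le> M" if t: "t \<in> {a..b}" for t
  proof
    show "0 \<le> f t" using t II nn by auto
    define l where "l = (b - t) / (b - a)"
    have h: "l * (b - a) = b - t" using assms(5) unfolding l_def by simp
    then have h2: "l * b - l * a = b - t" by (simp add: right_diff_distrib)
    have "t = l * a + (1 - l) * b" using h2 by (simp add: left_diff_distrib)
    moreover have "0 \<le> l" "l \<le> 1" using t assms(5) unfolding l_def by auto
    ultimately show "f t \<le> M" unfolding M_def using cv[OF assms(3,4)] by metis
  qed
  have mid: "f ((a+b)/2) \<le> f t + f (a + b - t)" if t: "t \<in> {a..b}" for t
  proof -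
    have e: "(1/2) * t + (1 - 1/2) * (a + b - t) = (a+b)/2" by (simp add: field_simps)
    have "t \<in> I" "a + b - t \<in> I" using t II by auto
    then have "f ((1/2) * t + (1 - 1/2) * (a + b - t)) \<le> f t + f (a + b - t)" by (rule cv) auto
    then show ?thesis unfolding e .
  qed
  define w1 where "w1 = (\<lambda>t. (b - t) powr (\<alpha> - 1))"
  define w2 where "w2 = (\<lambda>t. (t - a) powr (\<alpha> - 1))"
  define C where "C = (b-a) powr \<alpha> / \<alpha>"
  have i2: "(w2 has_integral C) {a..b}" unfolding w2_def C_def using w_int assms(5,7) by blast
  have i1: "(w1 has_integral C) {a..b}" using refl_int[OF i2] unfolding w1_def w2_def by simp
  have w1m: "w1 \<in> borel_measurable borel" unfolding w1_def by measurable
  have w2m: "w2 \<in> borel_measurable borel" unfolding w2_def by measurable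
  have fm: "set_borel_measurable lborel {a..b} f"
    using assms(6) unfolding set_integrable_def set_borel_measurable_def by blast
  have pm: "set_borel_measurable lborel {a..b} (\<lambda>t. w t * f t)" if "w \<in> borel_measurable borel" for w
  proof -
    have "(\<lambda>x. w x * (indicat_real {a..b} x *\<^sub>R f x)) \<in> borel_measurable lborel"
      using fm that unfolding set_borel_measurable_def by measurable
    then show ?thesis unfolding set_borel_measurable_def by (simp add: mult_ac)
  qed
  have wnn1: "0 \<le> w1 t" for t unfolding w1_def by simp
  have wnn2: "0 \<le> w2 t" for t unfolding w2_def by simp
  have pint: "set_integrable lborel {a..b} (\<lambda>t. w t * f t)"
    if wm: "w \<in> borel_measurable borel" and wi: "(w has_integral C) {a..b}" and wn: "\<And>t. 0 \<le> w t" for w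
  proof (rule set_integrable_bound[OF _ pm[OF wm]])
    have "(\<lambda>t. M * w t) integrable_on {a..b}" using has_integral_mult_right[OF wi] by (auto simp: integrable_on_def)
    moreover have "0 \<le> M" using bnd[of a] assms(5) by auto
    moreover have "set_borel_measurable lborel {a..b} (\<lambda>t. M * w t)"
      using wm unfolding set_borel_measurable_def by measurable
    ultimately show "set_integrable lborel {a..b} (\<lambda>t. M * w t)"
      using wn by (intro lborel_of_HK) auto
    show "AE x in lborel. x \<in> {a..b} \<longrightarrow> norm (w x * f x) \<le> norm (M * w x)"
    proof (rule AE_I2, intro impI)
      fix x assume x: "x \<in> {a..b}"
      have "w x * f x \<le> w x * M" using bnd[OF x] wn[of x] by (intro mult_left_mono) auto
      then show "norm (w x * f x) \<le> norm (M * w x)" using bnd[OF x] wn[of x] by (simp add: mult_ac)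
    qed
  qed
  have L: "RL_left \<alpha> a f b = (1 / Gamma \<alpha>) * integral {a..b} (\<lambda>t. w1 t * f t)"
    unfolding RL_left_def using set_borel_integral_eq_integral(2)[OF pint[OF w1m i1 wnn1]]
    by (simp add: w1_def)
  have R: "RL_right \<alpha> b f a = (1 / Gamma \<alpha>) * integral {a..b} (\<lambda>t. w2 t * f t)"
    unfolding RL_right_def using set_borel_integral_eq_integral(2)[OF pint[OF w2m i2 wnn2]]
    by (simp add: w2_def)
  have J1i: "(\<lambda>t. w1 t * f t) integrable_on {a..b}" using set_borel_integral_eq_integral(1)[OF pint[OF w1m i1 wnn1]] .
  have J2i: "(\<lambda>t. w2 t * f t) integrable_on {a..b}" using set_borel_integral_eq_integral(1)[OF pint[OF w2m i2 wnn2]] .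
  define J1 where "J1 = integral {a..b} (\<lambda>t. w1 t * f t)"
  define J2 where "J2 = integral {a..b} (\<lambda>t. w2 t * f t)"
  have Gp: "Gamma \<alpha> > 0" using assms(7) by (simp add: Gamma_real_pos)
  have Cp: "C > 0" unfolding C_def using assms(5,7) by simp
  have E: "Gamma (\<alpha> + 1) / (b - a) powr \<alpha> * (RL_left \<alpha> a f b + RL_right \<alpha> b f a) = (J1 + J2) / C"
  proof -
    have g: "Gamma (\<alpha> + 1) = \<alpha> * Gamma \<alpha>" using assms(7) by (intro Gamma_plus1) (auto elim!: nonpos_Ints_cases)
    have p: "(b - a) powr \<alpha> > 0" using assms(5) by simp
    show ?thesis unfolding L R J1_def[symmetric] J2_def[symmetric] C_def g
      using Gp p assms(7) by (simp add: field_simps less_imp_neq[OF Gp, symmetric])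
  qed
  have J1le: "J1 \<le> M * C"
  proof -
    have "J1 \<le> integral {a..b} (\<lambda>t. M * w1 t)" unfolding J1_def
    proof (rule integral_le[OF J1i])
      show "(\<lambda>t. M * w1 t) integrable_on {a..b}" using has_integral_mult_right[OF i1] by (auto simp: integrable_on_def)
      fix x assume "x \<in> {a..b}"
      then have "w1 x * f x \<le> w1 x * M" using bnd[of x] wnn1[of x] by (intro mult_left_mono) auto
      then show "w1 x * f x \<le> M * w1 x" by (simp add: mult.commute)
    qed
    also have "\<dots> = M * C" using i1 by (simp add: integral_unique)
    finally show ?thesis .
  qed
  have J2le: "J2 \<le> M * C"
  proof -
    have "J2 \<le> integral {a..b} (\<lambda>t. M * w2 t)" unfolding J2_def
    proof (rule integral_le[OF J2i])
      show "(\<lambda>t. M * w2 t) integrable_on {a..b}" using has_integral_mult_right[OF i2] by (auto simp: integrable_on_def)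
      fix x assume "x \<in> {a..b}"
      then have "w2 x * f x \<le> w2 x * M" using bnd[of x] wnn2[of x] by (intro mult_left_mono) auto
      then show "w2 x * f x \<le> M * w2 x" by (simp add: mult.commute)
    qed
    also have "\<dots> = M * C" using i2 by (simp add: integral_unique)
    finally show ?thesis .
  qed
  have r1: "((\<lambda>t. w2 t * f (a + b - t)) has_integral J1) {a..b}"
    using refl_int[OF integrable_integral[OF J1i]] unfolding J1_def w1_def w2_def by simp
  have sum: "((\<lambda>t. w2 t * (f t + f (a + b - t))) has_integral (J1 + J2)) {a..b}"
    using has_integral_add[OF r1 integrable_integral[OF J2i]] unfolding J2_def by (simp add: algebra_simps)
  have "f ((a+b)/2) * C \<le> J1 + J2"
  proof -
    have "((\<lambda>t. f ((a+b)/2) * w2 t) has_integral f ((a+b)/2) * C) {a..b}"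
      using has_integral_mult_right[OF i2] by simp
    then show ?thesis using sum
      by (rule has_integral_le) (use mid wnn2 in \<open>auto simp: mult.commute intro: mult_left_mono\<close>)
  qed
  then have A: "f ((a+b)/2) \<le> (J1 + J2) / C" using Cp by (simp add: field_simps)
  have B: "(J1 + J2) / C \<le> 2 * (f a + f b)" using J1le J2le Cp unfolding M_def by (simp add: field_simps)
  show ?thesis unfolding E using A B by simp
qed

end
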